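(* Let $s\in(0,1]$ and $1<p<\infty$. There is a constant $C$ depending only on $N,p,s$ such that for every measurable $f$ on $\mathbb R^N$ with $\Phi^s(f)\in L^p(\mathbb R^N)$, $$\Big\|\log\Big(1+\frac{|f(x)-f(y)|}{|x-y|^s}\Big)\frac{1}{|x-y|^{N/p}}\Big\|_{L(p,\infty)(\mathbb R^N\times\mathbb R^N)}\le C\,\|\Phi^s(f)\|_{L^p(\mathbb R^N)}.$$
   Context: $\Phi^s(f)(x)=\sup_{r>0}\frac{1}{\mathcal L^N(B(x,r))}\int_{B(x,r)}\log\Big(\frac{|f(x)-f(y)|}{r^s}+1\Big)\,dy$; the space $\mathcal N^{s,p}(\mathbb R^N)$ has seminorm $\|\Phi^s(f)\|_{L^p(\mathbb R^N)}$. For measurable $F$ on $(Y,\nu)$, $\|F\|_{L(p,\infty)(Y,\nu)}=\sup_{\lambda>0}\lambda\,\nu(\{|F|>\lambda\})^{1/p}$; $\mathbb R^N\times\mathbb R^N$ carries Lebesgue measure. *)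

theory Defs
  imports "HOL-Analysis.Analysis"
begin

definition epowr :: "ennreal \<Rightarrow> real \<Rightarrow> ennreal" where
  "epowr x a = (if x = top then top else ennreal (enn2real x powr a))"

definition Phi :: "real \<Rightarrow> ('a::euclidean_space \<Rightarrow> real) \<Rightarrow> 'a \<Rightarrow> ennreal" where
  "Phi s f x = (SUP r\<in>{0<..}.
      (\<integral>\<^sup>+ y. indicator (ball x r) y * ennreal (ln (\<bar>f x - f y\<bar> / r powr s + 1)) \<partial>lebesgue)
        / emeasure lebesgue (ball x r))"

definition Lp_norm :: "'a measure \<Rightarrow> real \<Rightarrow> ('a \<Rightarrow> ennreal) \<Rightarrow> ennreal" where
  "Lp_norm M p g = epowr (\<integral>\<^sup>+ x. epowr (g x) p \<partial>M) (1 / p)"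

definition weak_Lp_norm :: "'a measure \<Rightarrow> real \<Rightarrow> ('a \<Rightarrow> real) \<Rightarrow> ennreal" where
  "weak_Lp_norm M p F = (SUP l\<in>{0<..}.
      ennreal l * epowr (emeasure M {z \<in> space M. \<bar>F z\<bar> > l}) (1 / p))"

end

theory Submission
  imports Defs
begin

lemma ball_leb: "r \<ge> 0 \<Longrightarrow> emeasure lebesgue (ball (c::'a::euclidean_space) r) = ennreal (unit_ball_vol (DIM('a)) * r ^ DIM('a))"
  by (simp add: emeasure_ball)

lemma ln_sub: fixes u v :: real assumes "u \<ge> 0" "v \<ge> 0" "w \<le> u + v" "w \<ge> 0"
  shows "ln (1 + w) \<le> ln (1 + u) + ln (1 + v)"
proof -
  have "w \<le> u + v + u * v" using assms mult_nonneg_nonneg[of u v] by linarith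
  hence "ln (1+w) \<le> ln ((1+u)*(1+v))" using assms by (intro ln_mono) (auto simp: algebra_simps)
  also have "\<dots> = ln (1+u) + ln(1+v)" using assms by (simp add: ln_mult)
  finally show ?thesis .
qed

lemma ln_two: fixes t :: real assumes "t \<ge> 0" "w \<le> 2*t" "w \<ge> 0"
  shows "ln (1 + w) \<le> 2 * ln (1 + t)"
proof -
  have "w \<le> 2 * t + t * t" using assms mult_nonneg_nonneg[of t t] by linarith
  hence "ln (1+w) \<le> ln ((1+t)^2)" using assms by (intro ln_mono) (auto simp: power2_eq_square algebra_simps)
  also have "\<dots> = 2 * ln(1+t)" using assms by (simp add: ln_realpow)
  finally show ?thesis .
qed

lemma meas_ln: fixes f :: "'a::euclidean_space \<Rightarrow> real"
  assumes "f \<in> borel_measurable lebesgue"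
  shows "(\<lambda>z. ennreal (ln (\<bar>c - f z\<bar> / d + 1))) \<in> borel_measurable lebesgue"
  using assms by measurable

lemma Phi_ge:
  fixes f :: "'a::euclidean_space \<Rightarrow> real"
  assumes "r > 0"
  shows "(\<integral>\<^sup>+ y. indicator (ball x r) y * ennreal (ln (\<bar>f x - f y\<bar> / r powr s + 1)) \<partial>lebesgue)
     \<le> Phi s f x * emeasure lebesgue (ball x r)"
proof -
  let ?I = "(\<integral>\<^sup>+ y. indicator (ball x r) y * ennreal (ln (\<bar>f x - f y\<bar> / r powr s + 1)) \<partial>lebesgue)"
  let ?m = "emeasure lebesgue (ball x r)"
  have "?m = ennreal (unit_ball_vol (DIM('a)) * r ^ DIM('a))" using assms by (intro ball_leb) simp
  moreover have "unit_ball_vol (DIM('a)) * r ^ DIM('a) > 0" using assms by simp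
  ultimately have m0: "?m \<noteq> 0" "?m \<noteq> top" by (simp_all only: ennreal_eq_0_iff not_le ennreal_neq_top not_False_eq_True)
  have "?I / ?m \<le> Phi s f x" unfolding Phi_def using assms by (intro SUP_upper2[of r]) auto
  hence "?I / ?m * ?m \<le> Phi s f x * ?m" by (rule mult_right_mono) simp
  also have "?I / ?m * ?m = ?I" using m0 by (simp add: ennreal_divide_times ennreal_divide_self less_top)
  finally show ?thesis .
qed

lemma two_powr_le: fixes r s :: real assumes "r > 0" "0 < s" "s \<le> 1"
  shows "(2*r) powr s \<le> 2 * r powr s"
proof -
  have "(2*r) powr s = 2 powr s * r powr s" using assms by (simp add: powr_mult)
  also have "2 powr s \<le> 2 powr (1::real)" using assms by (intro powr_mono) auto
  hence "2 powr s * r powr s \<le> 2 * r powr s" by (intro mult_right_mono) auto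
  finally show ?thesis .
qed

lemma pointwise:
  fixes f :: "'a::euclidean_space \<Rightarrow> real"
  assumes fm: "f \<in> borel_measurable lebesgue" and s: "0 < s" "s \<le> 1" and xy: "x \<noteq> y"
  shows "ennreal (ln (1 + \<bar>f x - f y\<bar> / norm (x - y) powr s))
         \<le> Phi s f x + 2 ^ (DIM('a) + 1) * Phi s f y"
proof -
  define r where "r = norm (x - y)"
  have r: "r > 0" using xy by (simp add: r_def)
  define L where "L = ln (1 + \<bar>f x - f y\<bar> / r powr s)"
  define a where "a z = ennreal (ln (\<bar>f x - f z\<bar> / r powr s + 1))" for z
  define b where "b z = ennreal (ln (\<bar>f y - f z\<bar> / (2*r) powr s + 1))" for z
  let ?B = "ball x r" and ?B' = "ball y (2*r)"
  define m where "m = emeasure lebesgue ?B"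
  have mB: "m = ennreal (unit_ball_vol (DIM('a)) * r ^ DIM('a))" unfolding m_def using r by (intro ball_leb) simp
  have mpos: "unit_ball_vol (DIM('a)) * r ^ DIM('a) > 0" using r by simp
  have m0: "m \<noteq> 0" "m \<noteq> top" using mB mpos by (simp_all only: ennreal_eq_0_iff not_le ennreal_neq_top not_False_eq_True)
  have mB': "emeasure lebesgue ?B' = ennreal (2 ^ DIM('a)) * m"
  proof -
    have "emeasure lebesgue ?B' = ennreal (unit_ball_vol (DIM('a)) * (2*r) ^ DIM('a))" using r by (intro ball_leb) simp
    also have "unit_ball_vol (DIM('a)) * (2*r) ^ DIM('a) = 2 ^ DIM('a) * (unit_ball_vol (DIM('a)) * r ^ DIM('a))"
      by (simp add: power_mult_distrib)
    finally show ?thesis using mB mpos by (simp add: ennreal_mult)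
  qed
  have L0: "L \<ge> 0" unfolding L_def by simp
  have key: "indicator ?B z * ennreal L \<le> indicator ?B z * a z + 2 * (indicator ?B' z * b z)" for z
  proof (cases "z \<in> ?B")
    case True
    have "dist y z \<le> dist y x + dist x z" by (rule dist_triangle)
    moreover have "dist y x = r" by (simp add: r_def dist_norm norm_minus_commute)
    ultimately have zB': "z \<in> ?B'" using True by auto
    define u where "u = \<bar>f x - f z\<bar> / r powr s"
    define v where "v = \<bar>f z - f y\<bar> / r powr s"
    define t where "t = \<bar>f y - f z\<bar> / (2*r) powr s"
    have pr: "r powr s > 0" "(2*r) powr s > 0" using r by auto
    have "\<bar>f x - f y\<bar> / r powr s \<le> u + v" unfolding u_def v_def using pr
      by (simp add: add_divide_distrib[symmetric] divide_right_mono)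
    hence 1: "L \<le> ln (1 + u) + ln (1 + v)" unfolding L_def using pr
      by (intro ln_sub) (auto simp: u_def v_def)
    have "v \<le> 2 * t"
    proof -
      have "v = \<bar>f y - f z\<bar> / r powr s" by (simp add: v_def abs_minus_commute)
      also have "\<dots> \<le> \<bar>f y - f z\<bar> / ((2*r) powr s / 2)"
        using pr two_powr_le[OF r s] by (intro divide_left_mono) auto
      also have "\<dots> = 2 * t" by (simp add: t_def)
      finally show ?thesis .
    qed
    hence 2: "ln (1 + v) \<le> 2 * ln (1 + t)" using pr by (intro ln_two) (auto simp: t_def v_def)
    have "L \<le> ln (1 + u) + 2 * ln (1 + t)" using 1 2 by linarith
    hence "ennreal L \<le> ennreal (ln (1 + u) + 2 * ln (1 + t))" by (rule ennreal_leI)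
    also have "\<dots> = a z + 2 * b z" unfolding a_def b_def u_def t_def using pr
      by (simp add: ennreal_plus[symmetric] ennreal_mult add.commute)
    finally show ?thesis using True zB' by simp
  qed auto
  have am: "a \<in> borel_measurable lebesgue" unfolding a_def by (rule meas_ln[OF fm])
  have bm: "b \<in> borel_measurable lebesgue" unfolding b_def by (rule meas_ln[OF fm])
  have e2: "ennreal (2 ^ DIM('a)) = 2 ^ DIM('a)" by (simp add: ennreal_power[symmetric])
  have bl: "ball c e \<in> sets lebesgue" for c :: 'a and e by simp
  have i1: "(\<lambda>z. indicator ?B z * a z) \<in> borel_measurable lebesgue"
    by (intro borel_measurable_times_ennreal borel_measurable_indicator am bl)
  have i3: "(\<lambda>z. indicator ?B' z * b z) \<in> borel_measurable lebesgue"
    by (intro borel_measurable_times_ennreal borel_measurable_indicator bm bl)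
  have i2: "(\<lambda>z. 2 * (indicator ?B' z * b z)) \<in> borel_measurable lebesgue"
    by (intro borel_measurable_times_ennreal borel_measurable_const i3)
  have "ennreal L * m = (\<integral>\<^sup>+ z. indicator ?B z * ennreal L \<partial>lebesgue)"
    unfolding m_def by (simp add: nn_integral_cmult_indicator mult.commute)
  also have "\<dots> \<le> (\<integral>\<^sup>+ z. indicator ?B z * a z + 2 * (indicator ?B' z * b z) \<partial>lebesgue)"
    by (intro nn_integral_mono key)
  also have "\<dots> = (\<integral>\<^sup>+ z. indicator ?B z * a z \<partial>lebesgue) + 2 * (\<integral>\<^sup>+ z. indicator ?B' z * b z \<partial>lebesgue)"
    by (subst nn_integral_add[OF i1 i2]) (simp add: nn_integral_cmult[OF i3])
  also have "\<dots> \<le> Phi s f x * m + 2 * (Phi s f y * (ennreal (2 ^ DIM('a)) * m))"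
    unfolding m_def[symmetric] mB'[symmetric]
    apply (intro add_mono mult_left_mono)
    using Phi_ge[OF r, of x f s] Phi_ge[of "2*r" y f s] r unfolding a_def b_def m_def
    by (auto simp: abs_minus_commute)
  also have "\<dots> = (Phi s f x + 2 ^ (DIM('a) + 1) * Phi s f y) * m"
    by (simp add: algebra_simps e2)
  finally have "m * ennreal L \<le> m * (Phi s f x + 2 ^ (DIM('a) + 1) * Phi s f y)" by (simp add: mult.commute)
  hence "ennreal L \<le> Phi s f x + 2 ^ (DIM('a) + 1) * Phi s f y" using m0 by (simp add: ennreal_mult_le_mult_iff)
  thus ?thesis by (simp add: L_def r_def)
qed
lemma final_arith:
  fixes l p K P Ir Sr :: real
  assumes "l > 0" "p > 0" "K > 0" "P > 0" "Ir \<ge> 0" "Sr \<ge> 0" "Sr \<le> K * (P/l) powr p * Ir"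
  shows "l * Sr powr (1/p) \<le> K powr (1/p) * P * Ir powr (1/p)"
proof -
  have "Sr powr (1/p) \<le> (K * (P/l) powr p * Ir) powr (1/p)"
    using assms by (intro powr_mono2) auto
  also have "\<dots> = K powr (1/p) * ((P/l) powr p) powr (1/p) * Ir powr (1/p)"
    using assms by (simp add: powr_mult)
  also have "((P/l) powr p) powr (1/p) = P/l" using assms by (simp add: powr_powr)
  finally have "l * Sr powr (1/p) \<le> l * (K powr (1/p) * (P/l) * Ir powr (1/p))"
    using assms by (intro mult_left_mono) auto
  also have "\<dots> = K powr (1/p) * P * Ir powr (1/p)" using assms by (simp add: field_simps)
  finally show ?thesis .
qed

lemma majorant:
  fixes g :: "'a::euclidean_space \<Rightarrow> ennreal"
  assumes "g \<in> borel_measurable lebesgue"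
  shows "\<exists>h \<in> borel_measurable borel. (\<forall>x. g x \<le> h x) \<and> (AE x in lborel. g x = h x)"
proof -
  obtain g' where g': "g' \<in> borel_measurable lborel" "AE x in lborel. g x = g' x"
    using completion_ex_borel_measurable[OF assms] by blast
  obtain N where N: "{x \<in> space lborel. \<not> g x = g' x} \<subseteq> N" "N \<in> null_sets lborel"
    using g'(2) unfolding eventually_ae_filter by blast
  define h where "h x = (if x \<in> N then top else g' x)" for x
  have Nb: "N \<in> sets borel" using N(2) by (auto simp: null_sets_def)
  have "h \<in> borel_measurable borel" unfolding h_def
    using g'(1) Nb by (intro measurable_If_set) auto
  moreover have "\<forall>x. g x \<le> h x"
  proof
    fix x show "g x \<le> h x"
    proof (cases "x \<in> N")
      case False
      hence "g x = g' x" using N(1) by auto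
      thus ?thesis using False by (simp add: h_def)
    qed (simp add: h_def)
  qed
  moreover have "AE x in lborel. g x = h x"
    using g'(2) AE_not_in[OF N(2)] by eventually_elim (auto simp: h_def)
  ultimately show ?thesis by blast
qed

lemma level_ball:
  fixes x :: "'a::euclidean_space" and v :: ennreal
  assumes l: "l > 0" and P: "P > 0" and p: "p > 0"
  shows "emeasure lborel {y. ennreal (l * norm (x - y) powr (real DIM('a) / p) / P) < v}
       = ennreal (unit_ball_vol (DIM('a)) * (P/l) powr p) * epowr v p"
proof (cases v)
  case top
  have "{y. ennreal (l * norm (x - y) powr (real DIM('a) / p) / P) < v} = UNIV" using top by auto
  moreover have "unit_ball_vol (DIM('a)) * (P/l) powr p > 0" using l P by simp
  moreover have U: "unit_ball_vol (real DIM('a)) \<noteq> 0" using unit_ball_vol_pos[of "real DIM('a)"] by linarith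
  ultimately show ?thesis using top l P U by (simp add: epowr_def ennreal_mult_top)
next
  case (real t)
  define q where "q = real DIM('a) / p"
  have q: "q > 0" using p by (simp add: q_def)
  show ?thesis
  proof (cases "t = 0")
    case True
    have "{y. ennreal (l * norm (x - y) powr (real DIM('a) / p) / P) < v} = {}" using real True by auto
    then show ?thesis using True real p by (simp add: epowr_def)
  next
    case False
    hence t: "t > 0" using real by simp
    define R where "R = (P*t/l) powr (1/q)"
    have R: "R > 0" using t l P by (simp add: R_def)
    have Rq: "R powr q = P*t/l" using q t l P by (simp add: R_def powr_powr)
    have "{y. ennreal (l * norm (x - y) powr q / P) < v} = ball x R"
    proof (intro set_eqI iffI)
      fix y assume "y \<in> {y. ennreal (l * norm (x - y) powr q / P) < v}"
      hence "l * norm (x - y) powr q / P < t" using real t l P by (simp add: ennreal_less_iff)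
      hence "norm (x - y) powr q < R powr q" using l P Rq by (simp add: field_simps) (metis mult_less_cancel_left_pos)
      hence "norm (x - y) < R" using q by (meson not_le powr_mono2 less_imp_le norm_ge_zero R)
      thus "y \<in> ball x R" by (simp add: dist_norm)
    next
      fix y assume "y \<in> ball x R"
      hence "norm (x - y) < R" by (simp add: dist_norm)
      hence "norm (x - y) powr q < R powr q" using q by (intro powr_less_mono2) auto
      hence "l * norm (x - y) powr q / P < t" using l P Rq by (simp add: field_simps)
      thus "y \<in> {y. ennreal (l * norm (x - y) powr q / P) < v}" using real l P
        by (simp add: ennreal_less_iff)
    qed
    hence "emeasure lborel {y. ennreal (l * norm (x - y) powr (real DIM('a) / p) / P) < v}
        = ennreal (unit_ball_vol (DIM('a)) * R ^ DIM('a))" using R by (simp add: q_def emeasure_ball)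
    also have "R ^ DIM('a) = (P/l) powr p * t powr p"
    proof -
      have "R ^ DIM('a) = R powr real DIM('a)" using R by (simp add: powr_realpow)
      also have "\<dots> = (P*t/l) powr p" using q p by (simp add: R_def powr_powr q_def)
      also have "\<dots> = (P/l) powr p * t powr p" using P l t by (simp add: powr_mult[symmetric])
      finally show ?thesis .
    qed
    finally show ?thesis using real t by (simp add: epowr_def ennreal_mult mult.assoc)
  qed
qed

lemma epowr_meas: assumes [measurable]: "h \<in> borel_measurable M" shows "(\<lambda>x. epowr (h x) p) \<in> borel_measurable M"
  unfolding epowr_def by measurable

lemma measA:
  fixes h :: "'a::euclidean_space \<Rightarrow> ennreal"
  assumes hm: "h \<in> borel_measurable borel" and l: "l > 0" and P: "P > 0" and p: "p > 0"
  shows "{z::'a\<times>'a. ennreal (l * norm (fst z - snd z) powr (real DIM('a) / p) / P) < h (fst z)} \<in> sets lborel"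
    "emeasure lborel {z::'a\<times>'a. ennreal (l * norm (fst z - snd z) powr (real DIM('a) / p) / P) < h (fst z)}
     = ennreal (unit_ball_vol (DIM('a)) * (P/l) powr p) * (\<integral>\<^sup>+x. epowr (h x) p \<partial>lborel)"
proof -
  let ?A = "{z::'a\<times>'a. ennreal (l * norm (fst z - snd z) powr (real DIM('a) / p) / P) < h (fst z)}"
  note hm[measurable]
  have "{z \<in> space (lborel \<Otimes>\<^sub>M lborel). ennreal (l * norm (fst z - snd z) powr (real DIM('a) / p) / P) < h (fst z)} \<in> sets (lborel \<Otimes>\<^sub>M lborel)" by measurable
  hence As: "?A \<in> sets (lborel \<Otimes>\<^sub>M lborel)" by (simp add: space_pair_measure)
  thus "?A \<in> sets lborel" by (simp only: lborel_prod)
  have "emeasure lborel ?A = emeasure (lborel \<Otimes>\<^sub>M lborel) ?A" by (simp add: lborel_prod)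
  also have "\<dots> = (\<integral>\<^sup>+x. emeasure lborel (Pair x -` ?A) \<partial>lborel)"
    by (rule lborel.emeasure_pair_measure_alt[OF As])
  also have "\<dots> = (\<integral>\<^sup>+x. ennreal (unit_ball_vol (DIM('a)) * (P/l) powr p) * epowr (h x) p \<partial>lborel)"
    by (intro nn_integral_cong) (simp add: vimage_def level_ball[OF l P p])
  also have "\<dots> = ennreal (unit_ball_vol (DIM('a)) * (P/l) powr p) * (\<integral>\<^sup>+x. epowr (h x) p \<partial>lborel)"
    by (rule nn_integral_cmult) (intro epowr_meas, simp)
  finally show "emeasure lborel ?A = ennreal (unit_ball_vol (DIM('a)) * (P/l) powr p) * (\<integral>\<^sup>+x. epowr (h x) p \<partial>lborel)" .
qed

lemma measB:
  fixes h :: "'a::euclidean_space \<Rightarrow> ennreal"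
  assumes hm: "h \<in> borel_measurable borel" and l: "l > 0" and P: "P > 0" and p: "p > 0"
  shows "{z::'a\<times>'a. ennreal (l * norm (fst z - snd z) powr (real DIM('a) / p) / P) < h (snd z)} \<in> sets lborel"
    "emeasure lborel {z::'a\<times>'a. ennreal (l * norm (fst z - snd z) powr (real DIM('a) / p) / P) < h (snd z)}
     = ennreal (unit_ball_vol (DIM('a)) * (P/l) powr p) * (\<integral>\<^sup>+x. epowr (h x) p \<partial>lborel)"
proof -
  let ?A = "{z::'a\<times>'a. ennreal (l * norm (fst z - snd z) powr (real DIM('a) / p) / P) < h (snd z)}"
  note hm[measurable]
  have "{z \<in> space (lborel \<Otimes>\<^sub>M lborel). ennreal (l * norm (fst z - snd z) powr (real DIM('a) / p) / P) < h (snd z)} \<in> sets (lborel \<Otimes>\<^sub>M lborel)" by measurable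
  hence As: "?A \<in> sets (lborel \<Otimes>\<^sub>M lborel)" by (simp add: space_pair_measure)
  thus "?A \<in> sets lborel" by (simp only: lborel_prod)
  have "emeasure lborel ?A = emeasure (lborel \<Otimes>\<^sub>M lborel) ?A" by (simp add: lborel_prod)
  also have "\<dots> = (\<integral>\<^sup>+y. emeasure lborel ((\<lambda>x. (x, y)) -` ?A) \<partial>lborel)"
    by (rule lborel_pair.emeasure_pair_measure_alt2[OF As])
  also have "\<dots> = (\<integral>\<^sup>+x. ennreal (unit_ball_vol (DIM('a)) * (P/l) powr p) * epowr (h x) p \<partial>lborel)"
    by (intro nn_integral_cong) (simp add: vimage_def norm_minus_commute level_ball[OF l P p])
  also have "\<dots> = ennreal (unit_ball_vol (DIM('a)) * (P/l) powr p) * (\<integral>\<^sup>+x. epowr (h x) p \<partial>lborel)"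
    by (rule nn_integral_cmult) (intro epowr_meas, simp)
  finally show "emeasure lborel ?A = ennreal (unit_ball_vol (DIM('a)) * (P/l) powr p) * (\<integral>\<^sup>+x. epowr (h x) p \<partial>lborel)" .
qed

theorem mainTheorem14:
  fixes s p :: real
  assumes "0 < s" "s \<le> 1" "1 < p"
  shows "\<exists>C::real. \<forall>f :: 'a::euclidean_space \<Rightarrow> real.
           f \<in> borel_measurable lebesgue \<longrightarrow>
           Phi s f \<in> borel_measurable lebesgue \<longrightarrow>
           (\<integral>\<^sup>+ x. epowr (Phi s f x) p \<partial>lebesgue) < \<infinity> \<longrightarrow>
           weak_Lp_norm (lebesgue :: ('a \<times> 'a) measure) p
             (\<lambda>(x, y). ln (1 + \<bar>f x - f y\<bar> / norm (x - y) powr s)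
                        / norm (x - y) powr (real DIM('a) / p))
           \<le> ennreal C * Lp_norm lebesgue p (Phi s f)"
proof -
  have s: "0 < s" "s \<le> 1" and p: "p > 0" using assms by auto
  define \<omega> where "\<omega> = unit_ball_vol (real DIM('a))"
  have \<omega>: "\<omega> > 0" by (simp add: \<omega>_def)
  define P :: real where "P = 1 + 2 ^ (DIM('a) + 1)"
  have P: "P > 0" by (simp add: P_def add_pos_nonneg)
  have eP: "ennreal P = 1 + 2 ^ (DIM('a) + 1)"
    by (simp add: P_def ennreal_plus ennreal_power[symmetric] del: power_Suc)
  define q where "q = real DIM('a) / p"
  have q: "q > 0" using p by (simp add: q_def)
  define C where "C = (2 * \<omega>) powr (1/p) * P"
  show ?thesis
  proof (intro exI[of _ C] allI impI)
    fix f :: "'a \<Rightarrow> real"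
    assume fm: "f \<in> borel_measurable lebesgue" and Phim: "Phi s f \<in> borel_measurable lebesgue"
      and fin: "(\<integral>\<^sup>+ x. epowr (Phi s f x) p \<partial>lebesgue) < \<infinity>"
    obtain h where hm: "h \<in> borel_measurable borel" and hge: "\<And>x. Phi s f x \<le> h x"
      and hae: "AE x in lborel. Phi s f x = h x"
      using majorant[OF Phim] by blast
    define I where "I = (\<integral>\<^sup>+ x. epowr (Phi s f x) p \<partial>lebesgue)"
    have Ih: "(\<integral>\<^sup>+x. epowr (h x) p \<partial>lborel) = I"
    proof -
      have "I = (\<integral>\<^sup>+ x. epowr (Phi s f x) p \<partial>lborel)" unfolding I_def by (rule nn_integral_completion)
      also have "\<dots> = (\<integral>\<^sup>+x. epowr (h x) p \<partial>lborel)"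
        by (rule nn_integral_cong_AE) (use hae in eventually_elim, auto)
      finally show ?thesis by simp
    qed
    have Ifin: "I \<noteq> top" using fin by (simp add: I_def)
    define F where "F = (\<lambda>(x, y). ln (1 + \<bar>f x - f y\<bar> / norm (x - y) powr s)
                        / norm (x - y) powr (real DIM('a) / p))"
    show "weak_Lp_norm (lebesgue :: ('a \<times> 'a) measure) p F \<le> ennreal C * Lp_norm lebesgue p (Phi s f)"
      unfolding weak_Lp_norm_def
    proof (rule SUP_least)
      fix l :: real assume "l \<in> {0<..}"
      hence l: "l > 0" by simp
      define S where "S = {z \<in> space (lebesgue :: ('a \<times> 'a) measure). \<bar>F z\<bar> > l}"
      define A where "A = {z::'a\<times>'a. ennreal (l * norm (fst z - snd z) powr (real DIM('a) / p) / P) < h (fst z)}"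
      define B where "B = {z::'a\<times>'a. ennreal (l * norm (fst z - snd z) powr (real DIM('a) / p) / P) < h (snd z)}"
      define c where "c = ennreal (\<omega> * (P/l) powr p)"
      have As: "A \<in> sets lborel" and eA: "emeasure lborel A = c * I"
        using measA[OF hm l P p] Ih unfolding A_def c_def \<omega>_def by auto
      have Bs: "B \<in> sets lborel" and eB: "emeasure lborel B = c * I"
        using measB[OF hm l P p] Ih unfolding B_def c_def \<omega>_def by auto
      have sub: "S \<subseteq> A \<union> B"
      proof
        fix z assume zS: "z \<in> S"
        obtain x y where z: "z = (x, y)" by (cases z)
        have Fl: "\<bar>F (x, y)\<bar> > l" using zS z by (simp add: S_def)
        have xy: "x \<noteq> y"
        proof
          assume "x = y" thus False using Fl l by (simp add: F_def)
        qed
        define d where "d = norm (x - y) powr q"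
        have d: "d > 0" using xy by (simp add: d_def)
        define L where "L = ln (1 + \<bar>f x - f y\<bar> / norm (x - y) powr s)"
        have L0: "L \<ge> 0" by (simp add: L_def)
        have "F (x, y) = L / d" by (simp add: F_def L_def d_def q_def)
        hence "L / d > l" using Fl L0 d by simp
        hence Lgt: "L > l * d" using d by (simp add: field_simps)
        show "z \<in> A \<union> B"
        proof (rule ccontr)
          assume "z \<notin> A \<union> B"
          hence hx: "h x \<le> ennreal (l * d / P)" and hy: "h y \<le> ennreal (l * d / P)"
            by (auto simp: z A_def B_def d_def q_def not_less)
          have "ennreal L \<le> Phi s f x + 2 ^ (DIM('a) + 1) * Phi s f y"
            unfolding L_def by (rule pointwise[OF fm s xy])
          also have "\<dots> \<le> h x + 2 ^ (DIM('a) + 1) * h y"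
            by (intro add_mono mult_left_mono hge) auto
          also have "\<dots> \<le> ennreal (l * d / P) + 2 ^ (DIM('a) + 1) * ennreal (l * d / P)"
            by (intro add_mono mult_left_mono hx hy) auto
          also have "\<dots> = ennreal P * ennreal (l * d / P)" by (simp add: eP algebra_simps)
          also have "\<dots> = ennreal (l * d)" using P l d by (simp add: ennreal_mult[symmetric])
          finally have "L \<le> l * d" using l d by (simp add: ennreal_le_iff)
          thus False using Lgt by simp
        qed
      qed
      have eS: "emeasure lebesgue S \<le> 2 * c * I"
      proof (cases "S \<in> sets lebesgue")
        case True
        have ABs: "A \<union> B \<in> sets lborel" using As Bs by simp
        have "emeasure lebesgue S \<le> emeasure lebesgue (A \<union> B)"
          using True ABs sub by (intro emeasure_mono) auto
        also have "\<dots> = emeasure lborel (A \<union> B)" using ABs by simp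
        also have "\<dots> \<le> emeasure lborel A + emeasure lborel B"
          using As Bs by (intro emeasure_subadditive) auto
        also have "\<dots> = 2 * c * I" using eA eB by (simp add: mult_2 distrib_right)
        finally show ?thesis .
      next
        case False
        thus ?thesis by (simp add: emeasure_notin_sets)
      qed
      have cfin: "c \<noteq> top" by (simp add: c_def)
      have Sfin: "emeasure lebesgue S \<noteq> top"
      proof
        assume "emeasure lebesgue S = top"
        hence "2 * c * I = top" using eS by (simp add: top_unique)
        thus False using cfin Ifin by (simp add: ennreal_mult_eq_top_iff)
      qed
      define Mr where "Mr = enn2real (emeasure lebesgue S)"
      define Ir where "Ir = enn2real I"
      have Mr0: "Mr \<ge> 0" and Ir0: "Ir \<ge> 0" by (simp_all add: Mr_def Ir_def)
      have "Mr \<le> enn2real (2 * c * I)"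
        unfolding Mr_def using eS cfin Ifin
        by (intro enn2real_mono) (auto simp: ennreal_mult_less_top less_top)
      also have "\<dots> = (2 * \<omega>) * (P/l) powr p * Ir" using \<omega>
        by (simp add: c_def Ir_def enn2real_mult)
      finally have Mle: "Mr \<le> (2 * \<omega>) * (P/l) powr p * Ir" .
      have "l * Mr powr (1/p) \<le> (2 * \<omega>) powr (1/p) * P * Ir powr (1/p)"
        by (rule final_arith[OF l p _ P Ir0 Mr0 Mle]) (use \<omega> in simp)
      hence "ennreal (l * Mr powr (1/p)) \<le> ennreal (C * Ir powr (1/p))"
        by (intro ennreal_leI) (simp add: C_def)
      moreover have "ennreal l * epowr (emeasure lebesgue S) (1 / p) = ennreal (l * Mr powr (1/p))"
        using Sfin l by (simp add: epowr_def Mr_def ennreal_mult)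
      moreover have "ennreal C * Lp_norm lebesgue p (Phi s f) = ennreal (C * Ir powr (1/p))"
      proof -
        have "Lp_norm lebesgue p (Phi s f) = epowr I (1/p)" by (simp add: Lp_norm_def I_def)
        also have "\<dots> = ennreal (Ir powr (1/p))" using Ifin by (simp add: epowr_def Ir_def)
        finally show ?thesis using \<omega> P by (simp add: ennreal_mult C_def)
      qed
      ultimately show "ennreal l * epowr (emeasure lebesgue {z \<in> space lebesgue. \<bar>F z\<bar> > l}) (1 / p)
          \<le> ennreal C * Lp_norm lebesgue p (Phi s f)" by (simp add: S_def)
    qed
  qed
qed

end
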